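(* Let $\Gamma\subset\mathbf{Z}^n$ be an almost periodic pattern and $P\in O_n(\mathbf{R})$. Then the set $\widehat P(\Gamma)$ is an almost periodic pattern.
   Context: Balls are for the sup norm: $B(x,R)=\{y\in\mathbf{R}^n:\max_i|x_i-y_i|<R\}$. A set $\Gamma\subset\mathbf{R}^n$ is relatively dense if there is $R_\Gamma>0$ such that every ball of radius at least $R_\Gamma$ contains a point of $\Gamma$; uniformly discrete if there is $r_\Gamma>0$ such that every ball of radius at most $r_\Gamma$ contains at most one point of $\Gamma$; Delone if both. For a discrete set $\Gamma$ and $R\ge1$, $D_R^+(\Gamma)=\sup_{x\in\mathbf{R}^n}\frac{\operatorname{Card}(B(x,R)\cap\Gamma)}{\operatorname{Card}(B(x,R)\cap\mathbf{Z}^n)}$. A Delone set $\Gamma\subset\mathbf{Z}^n$ is an almost periodic pattern if for every $\varepsilon>0$ there exist $R_\varepsilon>0$ and a relatively dense set $\mathcal N_\varepsilon$ such that for all $R\ge R_\varepsilon$ and all $v\in\mathcal N_\varepsilon$, $D_R^+\big((\Gamma+v)\Delta\Gamma\big)<\varepsilon$. Let $p:\mathbf{R}\to\mathbf{Z}$ send $x$ to the unique integer $k$ with $k-1/2<x\le k+1/2$, $\pi((x_i)_i)=(p(x_i))_i$, and for $P\in O_n(\mathbf{R})$, $\widehat P:\mathbf{Z}^n\to\mathbf{Z}^n$, $\widehat P(x)=\pi(Px)$. *)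

theory Defs
  imports "HOL-Analysis.Analysis"
begin

definition int_to_real :: "int^'n \<Rightarrow> real^'n" where
  "int_to_real z = (\<chi> i. real_of_int (z $ i))"

definition supball_Z :: "real^'n \<Rightarrow> real \<Rightarrow> (int^'n) set" where
  "supball_Z x R = {z. (MAX i\<in>UNIV. \<bar>x $ i - real_of_int (z $ i)\<bar>) < R}"

definition relatively_dense :: "(int^'n) set \<Rightarrow> bool" where
  "relatively_dense G \<longleftrightarrow>
     (\<exists>RG>0. \<forall>x R. R \<ge> RG \<longrightarrow> (\<exists>g\<in>G. g \<in> supball_Z x R))"

definition uniformly_discrete :: "(int^'n) set \<Rightarrow> bool" where
  "uniformly_discrete G \<longleftrightarrow>
     (\<exists>rG>0. \<forall>x r. r \<le> rG \<longrightarrow>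
        (\<forall>a\<in>G \<inter> supball_Z x r. \<forall>b\<in>G \<inter> supball_Z x r. a = b))"

definition delone :: "(int^'n) set \<Rightarrow> bool" where
  "delone G \<longleftrightarrow> relatively_dense G \<and> uniformly_discrete G"

definition upper_density :: "real \<Rightarrow> (int^'n) set \<Rightarrow> real" where
  "upper_density R G =
     (SUP x\<in>(UNIV :: (real^'n) set).
        real (card (supball_Z x R \<inter> G)) / real (card (supball_Z x R)))"

definition translate :: "(int^'n) set \<Rightarrow> int^'n \<Rightarrow> (int^'n) set" where
  "translate G v = (\<lambda>g. g + v) ` G"

definition almost_periodic_pattern :: "(int^'n) set \<Rightarrow> bool" where
  "almost_periodic_pattern G \<longleftrightarrow> delone G \<and>
     (\<forall>\<epsilon>>0. \<exists>R\<epsilon>>0. \<exists>N. relatively_dense N \<and>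
        (\<forall>R v. R \<ge> R\<epsilon> \<and> R \<ge> 1 \<and> v \<in> N \<longrightarrow>
           upper_density R ((translate G v - G) \<union> (G - translate G v)) < \<epsilon>))"

definition round_half :: "real \<Rightarrow> int" where
  "round_half x = (THE k::int. real_of_int k - 1/2 < x \<and> x \<le> real_of_int k + 1/2)"

definition round_vec :: "real^'n \<Rightarrow> int^'n" where
  "round_vec x = (\<chi> i. round_half (x $ i))"

definition discretization :: "real^'n^'n \<Rightarrow> int^'n \<Rightarrow> int^'n" where
  "discretization P z = round_vec (P *v int_to_real z)"

end

theory Submission
  imports Defs
begin

lemma round_half_eq: "round_half a = \<lceil>a - 1/2\<rceil>"
  unfolding round_half_def
proof (rule the_equality)
  show "real_of_int \<lceil>a - 1 / 2\<rceil> - 1 / 2 < a \<and> a \<le> real_of_int \<lceil>a - 1 / 2\<rceil> + 1 / 2"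
    by linarith
next
  fix k :: int assume "real_of_int k - 1 / 2 < a \<and> a \<le> real_of_int k + 1 / 2"
  then show "k = \<lceil>a - 1 / 2\<rceil>" by (intro ceiling_unique[symmetric]) auto
qed
lemma round_half_add_int: "round_half (a + real_of_int m) = round_half a + m"
  unfolding round_half_eq
  by (metis add_diff_eq ceiling_add_of_int diff_add_eq)
lemma int_to_real_nth[simp]: "int_to_real z $ i = real_of_int (z $ i)"
  by (simp add: int_to_real_def)

lemma int_to_real_add: "int_to_real (a + b) = int_to_real a + int_to_real b"
  by (simp add: vec_eq_iff)
lemma supball_Z_iff:
  "z \<in> supball_Z x R \<longleftrightarrow> (\<forall>i. \<bar>x $ i - real_of_int (z $ i)\<bar> < R)"
  unfolding supball_Z_def by (simp add: Max_less_iff)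
lemma int_to_real_diff: "int_to_real (a - b) = int_to_real a - int_to_real b"
  by (simp add: vec_eq_iff)
lemma ortho_norm: fixes P :: "real^'n^'n" assumes "orthogonal_matrix P" shows "norm (P *v x) = norm x"
proof -
  have "orthogonal_transformation ((*v) P)"
    using orthogonal_transformation_matrix[of "(*v) P"] assms
    by (simp add: matrix_vector_mul_linear)
  then show ?thesis by (rule orthogonal_transformation_norm)
qed
lemma ortho_inv: fixes P :: "real^'n^'n" assumes "orthogonal_matrix P" shows "P *v (transpose P *v y) = y"
proof -
  have "P *v (transpose P *v y) = (P ** transpose P) *v y"
    by (rule matrix_vector_mul_assoc)
  also have "\<dots> = y" using assms unfolding orthogonal_matrix_def by simp
  finally show ?thesis .
qed

lemma norm_le_sum_abs: "norm (x::real^'n) \<le> (\<Sum>i\<in>UNIV. \<bar>x $ i\<bar>)"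
  by (rule norm_le_l1_cart)

lemma comp_le_norm: "\<bar>(x::real^'n) $ i\<bar> \<le> norm x"
  by (rule component_le_norm_cart)


definition Iset :: "real \<Rightarrow> real \<Rightarrow> int set" where
  "Iset a R = {k. \<bar>a - real_of_int k\<bar> < R}"

lemma Iset_eq: "Iset a R = {\<lfloor>a - R\<rfloor> + 1 .. \<lceil>a + R\<rceil> - 1}"
  unfolding Iset_def by (auto simp: abs_less_iff; linarith)

lemma Iset_finite: "finite (Iset a R)" by (simp add: Iset_eq)

lemma Iset_card: "card (Iset a R) = nat (\<lceil>a + R\<rceil> - \<lfloor>a - R\<rfloor> - 1)"
  by (simp add: Iset_eq)

lemma Iset_card_real: assumes "R \<ge> 1"
  shows "real (card (Iset a R)) = real_of_int (\<lceil>a + R\<rceil> - \<lfloor>a - R\<rfloor> - 1)"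
proof -
  have "a + R \<le> real_of_int \<lceil>a + R\<rceil>" by (rule le_of_int_ceiling)
  moreover have "real_of_int \<lfloor>a - R\<rfloor> \<le> a - R" by (rule of_int_floor_le)
  ultimately have "0 \<le> \<lceil>a + R\<rceil> - \<lfloor>a - R\<rfloor> - 1" using assms by linarith
  then show ?thesis unfolding Iset_card by simp
qed

lemma Iset_card_le: "R \<ge> 1 \<Longrightarrow> real (card (Iset a R)) \<le> 2*R+1"
proof -
  assume R: "R \<ge> 1"
  show ?thesis unfolding Iset_card_real[OF R] using ceiling_correct[of "a+R"] floor_correct[of "a-R"]
    by simp linarith
qed

lemma Iset_card_ge: "R \<ge> 1 \<Longrightarrow> 2*R-1 \<le> real (card (Iset a R))"
proof -
  assume R: "R \<ge> 1"
  have "a + R \<le> real_of_int \<lceil>a + R\<rceil>" by (rule le_of_int_ceiling)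
  moreover have "real_of_int \<lfloor>a - R\<rfloor> \<le> a - R" by (rule of_int_floor_le)
  ultimately show ?thesis unfolding Iset_card_real[OF R] by simp linarith
qed

lemma supball_bij: "bij_betw (\<lambda>z. (\<lambda>i. z $ i)) (supball_Z x R) (PiE UNIV (\<lambda>i. Iset (x$i) R))"
proof (rule bij_betwI')
  show "\<And>a b. a \<in> supball_Z x R \<Longrightarrow> b \<in> supball_Z x R \<Longrightarrow> ((\<lambda>i. a $ i) = (\<lambda>i. b $ i)) = (a = b)"
    by (simp add: vec_eq_iff fun_eq_iff)
  show "\<And>a. a \<in> supball_Z x R \<Longrightarrow> (\<lambda>i. a $ i) \<in> (\<Pi>\<^sub>E i\<in>UNIV. Iset (x $ i) R)"
    by (simp add: supball_Z_iff Iset_def PiE_iff)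
  show "\<And>y. y \<in> (\<Pi>\<^sub>E i\<in>UNIV. Iset (x $ i) R) \<Longrightarrow> \<exists>a\<in>supball_Z x R. y = (\<lambda>i. a $ i)"
    by (rule_tac x="\<chi> i. y i" in bexI) (auto simp: supball_Z_iff Iset_def PiE_iff)
qed

lemma supball_finite: "finite (supball_Z (x::real^'n) R)"
proof -
  have "finite (PiE (UNIV::'n set) (\<lambda>i. Iset (x$i) R))"
    by (rule finite_PiE) (auto simp: Iset_finite)
  then show ?thesis using bij_betw_finite[OF supball_bij[of x R]] by simp
qed

lemma supball_card: "card (supball_Z x R) = (\<Prod>i\<in>UNIV. card (Iset (x$i) R))"
proof -
  have "card (supball_Z x R) = card (PiE UNIV (\<lambda>i. Iset (x$i) R))"
    by (rule bij_betw_same_card[OF supball_bij])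
  also have "\<dots> = (\<Prod>i\<in>UNIV. card (Iset (x$i) R))"
    by (rule card_PiE) simp
  finally show ?thesis .
qed

lemma supball_card_le: "R \<ge> 1 \<Longrightarrow> real (card (supball_Z (x::real^'n) R)) \<le> (2*R+1) ^ CARD('n)"
proof -
  assume R: "R \<ge> 1"
  have "real (card (supball_Z x R)) = (\<Prod>i\<in>UNIV. real (card (Iset (x$i) R)))"
    by (simp add: supball_card)
  also have "\<dots> \<le> (\<Prod>i\<in>(UNIV::'n set). 2*R+1)"
    by (rule prod_mono) (use R Iset_card_le in auto)
  finally show ?thesis by simp
qed

lemma supball_card_ge: "R \<ge> 1 \<Longrightarrow> (2*R-1) ^ CARD('n) \<le> real (card (supball_Z (x::real^'n) R))"
proof -
  assume R: "R \<ge> 1"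
  have "(\<Prod>i\<in>(UNIV::'n set). 2*R-1) \<le> (\<Prod>i\<in>UNIV. real (card (Iset (x$i) R)))"
    by (rule prod_mono) (use R Iset_card_ge in auto)
  also have "\<dots> = real (card (supball_Z x R))"
    by (simp add: supball_card)
  finally show ?thesis by simp
qed

lemma supball_card_pos: "R \<ge> 1 \<Longrightarrow> 0 < real (card (supball_Z (x::real^'n) R))"
proof -
  assume "R \<ge> 1"
  then have "0 < (2*R-1) ^ CARD('n)" by (intro zero_less_power) linarith
  then show ?thesis using supball_card_ge[OF \<open>R\<ge>1\<close>, of x] by linarith
qed



definition ratio :: "(int^'n) set \<Rightarrow> real^'n \<Rightarrow> real \<Rightarrow> real" where
  "ratio G x R = real (card (supball_Z x R \<inter> G)) / real (card (supball_Z x R))"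

lemma upper_density_ratio: "upper_density R G = (SUP x. ratio G x R)"
  unfolding upper_density_def ratio_def by simp

lemma ratio_nonneg: "0 \<le> ratio G x R"
  unfolding ratio_def by simp

lemma ratio_le1: "ratio G (x::real^'n) R \<le> 1"
proof -
  have "card (supball_Z x R \<inter> G) \<le> card (supball_Z x R)"
    by (rule card_mono[OF supball_finite]) auto
  then show ?thesis unfolding ratio_def
    by (cases "card (supball_Z x R) = 0") (auto simp: divide_le_eq_1)
qed

lemma ratio_bdd: "bdd_above (range (\<lambda>x::real^'n. ratio G x R))"
  by (rule bdd_aboveI[where M=1]) (auto simp: ratio_le1)

lemma ratio_le_D: "ratio G (x::real^'n) R \<le> upper_density R G"
  unfolding upper_density_ratio by (rule cSUP_upper[OF _ ratio_bdd]) simp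

lemma D_le: "(\<And>x::real^'n. ratio G x R \<le> c) \<Longrightarrow> upper_density R G \<le> c"
  unfolding upper_density_ratio by (rule cSUP_least) auto

lemma D_nonneg: "0 \<le> upper_density R (G::(int^'n) set)"
  using ratio_le_D[of G 0 R] ratio_nonneg[of G 0 R] by linarith

lemma ratio_mono: "G \<subseteq> H \<Longrightarrow> ratio G (x::real^'n) R \<le> ratio H x R"
proof -
  assume "G \<subseteq> H"
  then have "card (supball_Z x R \<inter> G) \<le> card (supball_Z x R \<inter> H)"
    by (intro card_mono) (auto simp: supball_finite)
  then show ?thesis unfolding ratio_def by (simp add: divide_right_mono)
qed

lemma D_mono: "G \<subseteq> H \<Longrightarrow> upper_density R (G::(int^'n) set) \<le> upper_density R H"
proof (rule D_le)
  fix x :: "real^'n"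
  assume "G \<subseteq> H"
  then show "ratio G x R \<le> upper_density R H"
    using ratio_mono[of G H x R] ratio_le_D[of H x R] by linarith
qed

lemma ratio_union: "ratio (G \<union> H) (x::real^'n) R \<le> ratio G x R + ratio H x R"
proof -
  have "card (supball_Z x R \<inter> (G \<union> H)) \<le> card (supball_Z x R \<inter> G) + card (supball_Z x R \<inter> H)"
    unfolding Int_Un_distrib by (rule card_Un_le)
  then have "real (card (supball_Z x R \<inter> (G \<union> H))) \<le> real (card (supball_Z x R \<inter> G)) + real (card (supball_Z x R \<inter> H))"
    by linarith
  then show ?thesis unfolding ratio_def by (simp add: divide_right_mono add_divide_distrib[symmetric])
qed

lemma D_union: "upper_density R (G \<union> H) \<le> upper_density R (G::(int^'n) set) + upper_density R H"
proof (rule D_le)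
  fix x :: "real^'n"
  show "ratio (G \<union> H) x R \<le> upper_density R G + upper_density R H"
    using ratio_union[of G H x R] ratio_le_D[of G x R] ratio_le_D[of H x R] by linarith
qed

lemma D_UN: "finite I \<Longrightarrow> upper_density R (\<Union>i\<in>I. S i) \<le> (\<Sum>i\<in>I. upper_density R (S i::(int^'n) set))"
proof (induction I rule: finite_induct)
  case empty
  have "upper_density R ({}::(int^'n) set) \<le> 0"
    by (rule D_le) (simp add: ratio_def)
  then show ?case by simp
next
  case (insert i I)
  have "upper_density R (\<Union>j\<in>insert i I. S j) = upper_density R (S i \<union> (\<Union>j\<in>I. S j))" by simp
  also have "\<dots> \<le> upper_density R (S i) + upper_density R (\<Union>j\<in>I. S j)" by (rule D_union)
  also have "\<dots> \<le> upper_density R (S i) + (\<Sum>j\<in>I. upper_density R (S j))" using insert.IH by simp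
  finally show ?case using insert.hyps by simp
qed

lemma translate_inj: "inj_on (\<lambda>g::int^'n. g + t) A" by (rule inj_onI) simp

lemma supball_translate:
  "supball_Z (x + int_to_real t) R = translate (supball_Z x R) t"
proof -
  have "z \<in> supball_Z (x + int_to_real t) R \<longleftrightarrow> z - t \<in> supball_Z x R" for z
    by (simp add: supball_Z_iff algebra_simps)
  then show ?thesis unfolding translate_def
    by (auto simp: image_iff intro!: bexI[where x="_ - t"])
qed

lemma ratio_translate: "ratio (translate G t) (x::real^'n) R = ratio G (x - int_to_real t) R"
proof -
  have e: "supball_Z x R = translate (supball_Z (x - int_to_real t) R) t"
    using supball_translate[of "x - int_to_real t" t R] by simp
  have "supball_Z x R \<inter> translate G t = (\<lambda>g. g + t) ` (supball_Z (x - int_to_real t) R \<inter> G)"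
    unfolding e translate_def by (auto simp: image_iff)
  then have c1: "card (supball_Z x R \<inter> translate G t) = card (supball_Z (x - int_to_real t) R \<inter> G)"
    by (simp add: card_image translate_inj)
  have c2: "card (supball_Z x R) = card (supball_Z (x - int_to_real t) R)"
    unfolding e translate_def by (simp add: card_image translate_inj)
  show ?thesis unfolding ratio_def c1 c2 ..
qed

lemma D_translate: "upper_density R (translate G t) \<le> upper_density R (G::(int^'n) set)"
  by (rule D_le) (simp add: ratio_translate ratio_le_D)



lemma ortho_dist:
  fixes P :: "real^'n^'n"
  assumes "orthogonal_matrix P"
  shows "norm (P *v u - v) = norm (u - transpose P *v v)"
proof -
  have "P *v (u - transpose P *v v) = P *v u - P *v (transpose P *v v)"
    by (rule matrix_vector_mult_diff_distrib)
  also have "\<dots> = P *v u - v" by (subst ortho_inv[OF assms]) (rule refl)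
  finally have "P *v u - v = P *v (u - transpose P *v v)" by simp
  then show ?thesis by (simp only: ortho_norm[OF assms])
qed

lemma sum_abs_less:
  fixes w :: "real^'n"
  assumes "\<And>k. \<bar>w $ k\<bar> < r"
  shows "(\<Sum>k\<in>UNIV. \<bar>w $ k\<bar>) < real CARD('n) * r"
proof -
  have "(\<Sum>k\<in>UNIV. \<bar>w $ k\<bar>) < (\<Sum>k\<in>(UNIV::'n set). r)"
    by (rule sum_strict_mono) (auto simp: assms)
  then show ?thesis by simp
qed

lemma norm_less_card:
  fixes w :: "real^'n"
  assumes "\<And>k. \<bar>w $ k\<bar> < r"
  shows "norm w < real CARD('n) * r"
  using norm_le_sum_abs[of w] sum_abs_less[of w r, OF assms] by linarith

lemma reldense_image:
  fixes P :: "real^'n^'n" and G :: "(int^'n) set"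
  assumes P: "orthogonal_matrix P" and G: "relatively_dense G"
    and h: "\<And>z i. z \<in> G \<Longrightarrow> \<bar>real_of_int (h z $ i) - (P *v int_to_real z + c) $ i\<bar> \<le> b"
    and b: "b \<ge> 0"
  shows "relatively_dense (h ` G)"
proof -
  obtain RG where RG: "RG > 0" "\<And>x R. R \<ge> RG \<Longrightarrow> \<exists>g\<in>G. g \<in> supball_Z x R"
    using G unfolding relatively_dense_def by blast
  define RG' where "RG' = real CARD('n) * RG + b + 1"
  have "RG' > 0" unfolding RG'_def using RG(1) b by (simp add: add_nonneg_pos)
  moreover have "\<exists>g\<in>h ` G. g \<in> supball_Z x R" if R: "R \<ge> RG'" for x R
  proof -
    define y where "y = transpose P *v (x - c)"
    obtain g where g: "g \<in> G" "g \<in> supball_Z y RG" using RG(2)[of RG y] by auto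
    have "norm (int_to_real g - y) < real CARD('n) * RG"
      by (rule norm_less_card) (use g(2) in \<open>auto simp: supball_Z_iff abs_minus_commute\<close>)
    then have nrm: "norm (P *v int_to_real g - (x - c)) < real CARD('n) * RG"
      using ortho_dist[OF P] y_def by simp
    have "\<bar>x $ i - real_of_int (h g $ i)\<bar> < R" for i
    proof -
      have "\<bar>(P *v int_to_real g - (x - c)) $ i\<bar> \<le> norm (P *v int_to_real g - (x - c))"
        by (rule comp_le_norm)
      then have "\<bar>(P *v int_to_real g + c) $ i - x $ i\<bar> < real CARD('n) * RG"
        using nrm by (simp add: algebra_simps)
      then show ?thesis using h[OF g(1), of i] R unfolding RG'_def by linarith
    qed
    then show ?thesis using g(1) by (auto simp: supball_Z_iff)
  qed
  ultimately show ?thesis unfolding relatively_dense_def by blast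
qed

lemma uniformly_discrete_any: "uniformly_discrete (G::(int^'n) set)"
  unfolding uniformly_discrete_def
proof (intro exI[of _ "1/2"] conjI allI impI ballI)
  fix x :: "real^'n" and r :: real and a b
  assume r: "r \<le> 1/2" and a: "a \<in> G \<inter> supball_Z x r" and b: "b \<in> G \<inter> supball_Z x r"
  have "a $ i = b $ i" for i
  proof -
    have "\<bar>x $ i - real_of_int (a $ i)\<bar> < r" "\<bar>x $ i - real_of_int (b $ i)\<bar> < r"
      using a b by (auto simp: supball_Z_iff)
    then have "\<bar>real_of_int (a $ i) - real_of_int (b $ i)\<bar> < 1" using r by linarith
    then have "\<bar>a $ i - b $ i\<bar> < 1" by linarith
    then show ?thesis by linarith
  qed
  then show "a = b" by (simp add: vec_eq_iff)
qed simp



lemma abs_aux1: "\<bar>y - f\<bar> < (R::real) \<Longrightarrow> \<bar>f - (p + c)\<bar> \<le> 1/2 \<Longrightarrow> \<bar>p - (y - c)\<bar> < R + 1"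
  by arith

lemma card_ratio_bound:
  assumes R: "R \<ge> 1"
  shows "real (card (supball_Z (u::real^'n) (real CARD('n) * (R+1)))) / real (card (supball_Z (y::real^'n) R))
         \<le> (5 * real CARD('n)) ^ CARD('n)"
proof -
  define n where "n = real CARD('n)"
  have n1: "n \<ge> 1" unfolding n_def by simp
  have nR: "n * R \<ge> n" using R n1 by simp
  have R'1: "n * (R+1) \<ge> 1" using mult_mono[of 1 n 1 "R+1"] n1 R by simp
  have B2: "real (card (supball_Z u (n * (R+1)))) \<le> (2*(n*(R+1))+1) ^ CARD('n)"
    by (rule supball_card_le[OF R'1])
  have e1: "2*(n*(R+1))+1 = 2*(n*R) + 2*n + 1" "5*n*R = 5*(n*R)" by (simp_all add: algebra_simps)
  have "2*(n*(R+1))+1 \<le> 5*n*R" unfolding e1 using nR n1 by linarith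
  then have B2': "real (card (supball_Z u (n * (R+1)))) \<le> (5*n*R) ^ CARD('n)"
    using B2 power_mono[of "2*(n*(R+1))+1" "5*n*R" "CARD('n)"] R'1 by linarith
  have B1: "R ^ CARD('n) \<le> real (card (supball_Z y R))"
    using supball_card_ge[OF R, of y] power_mono[of R "2*R-1" "CARD('n)"] R by linarith
  have Rp: "0 < R ^ CARD('n)" using R by simp
  have "real (card (supball_Z u (n * (R+1)))) / real (card (supball_Z y R)) \<le> (5*n*R) ^ CARD('n) / R ^ CARD('n)"
    by (rule frac_le) (use B2' B1 Rp in auto)
  also have "\<dots> = (5*n) ^ CARD('n)" using R by (simp add: power_mult_distrib)
  finally show ?thesis unfolding n_def .
qed

lemma transfer:
  fixes P :: "real^'n^'n" and S :: "(int^'n) set" and f :: "int^'n \<Rightarrow> int^'n"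
  assumes P: "orthogonal_matrix P"
    and f: "\<And>z i. z \<in> S \<Longrightarrow> \<bar>real_of_int (f z $ i) - (P *v int_to_real z + c) $ i\<bar> \<le> 1/2"
    and R: "R \<ge> 1"
  shows "upper_density R (f ` S) \<le> (5 * real CARD('n)) ^ CARD('n) * upper_density (real CARD('n) * (R+1)) S"
proof (rule D_le)
  fix y :: "real^'n"
  define R' where "R' = real CARD('n) * (R+1)"
  define u where "u = transpose P *v (y - c)"
  have R'1: "R' \<ge> 1" unfolding R'_def using mult_mono[of 1 "real CARD('n)" 1 "R+1"] R by simp
  have incl: "supball_Z y R \<inter> f ` S \<subseteq> f ` (supball_Z u R' \<inter> S)"
  proof
    fix q assume q: "q \<in> supball_Z y R \<inter> f ` S"
    then obtain z where z: "z \<in> S" "q = f z" by auto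
    have "\<bar>(P *v int_to_real z - (y - c)) $ i\<bar> < R + 1" for i
    proof -
      have "\<bar>y $ i - real_of_int (f z $ i)\<bar> < R" using q z by (auto simp: supball_Z_iff)
      then show ?thesis using f[OF z(1), of i] abs_aux1 by simp
    qed
    then have "norm (P *v int_to_real z - (y - c)) < R'"
      unfolding R'_def by (rule norm_less_card)
    then have nz: "norm (int_to_real z - u) < R'" using ortho_dist[OF P] u_def by simp
    have "\<bar>u $ k - real_of_int (z $ k)\<bar> < R'" for k
      using comp_le_norm[of "int_to_real z - u" k] nz by (simp add: abs_minus_commute)
    then have "z \<in> supball_Z u R'" by (simp add: supball_Z_iff)
    then show "q \<in> f ` (supball_Z u R' \<inter> S)" using z by auto
  qed
  have "card (supball_Z y R \<inter> f ` S) \<le> card (f ` (supball_Z u R' \<inter> S))"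
    by (rule card_mono[OF _ incl]) (simp add: supball_finite)
  also have "\<dots> \<le> card (supball_Z u R' \<inter> S)" by (rule card_image_le) (simp add: supball_finite)
  finally have c: "real (card (supball_Z y R \<inter> f ` S)) \<le> real (card (supball_Z u R' \<inter> S))" by simp
  have B1: "0 < real (card (supball_Z y R))" by (rule supball_card_pos[OF R])
  have B2: "0 < real (card (supball_Z u R'))" by (rule supball_card_pos[OF R'1])
  have cr: "real (card (supball_Z u R')) / real (card (supball_Z y R)) \<le> (5 * real CARD('n)) ^ CARD('n)"
    unfolding R'_def by (rule card_ratio_bound[OF R])
  have "ratio (f ` S) y R \<le> real (card (supball_Z u R' \<inter> S)) / real (card (supball_Z y R))"
    unfolding ratio_def using c B1 by (simp add: divide_right_mono)
  also have "\<dots> = ratio S u R' * (real (card (supball_Z u R')) / real (card (supball_Z y R)))"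
    unfolding ratio_def using B2 by simp
  also have "\<dots> \<le> upper_density R' S * (5 * real CARD('n)) ^ CARD('n)"
    by (rule mult_mono) (use cr in \<open>auto simp: ratio_le_D D_nonneg\<close>)
  finally show "ratio (f ` S) y R \<le> (5 * real CARD('n)) ^ CARD('n) * upper_density (real CARD('n) * (R+1)) S"
    unfolding R'_def by (simp add: mult.commute)
qed



lemma pow_bound:
  fixes a h :: real
  assumes a: "a > 0" and h: "h \<ge> 0" and kh: "real k * h \<le> 1"
  shows "(a * (1 + h)) ^ k \<le> 3 * a ^ k"
proof -
  have "(1 + h) ^ k \<le> exp h ^ k" by (rule power_mono) (use h in auto)
  also have "\<dots> = exp (real k * h)" by (simp add: exp_of_nat_mult)
  also have "\<dots> \<le> exp 1" using kh by simp
  also have "\<dots> \<le> 3" by (rule exp_le)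
  finally have "(1+h)^k \<le> 3" .
  then have "a ^ k * (1+h)^k \<le> a ^ k * 3" by (rule mult_left_mono) (use a in simp)
  then show ?thesis by (simp add: power_mult_distrib mult.commute)
qed

definition ej :: "'n \<Rightarrow> int \<Rightarrow> int^'n" where
  "ej j t = (\<chi> i. if i = j then t else 0)"

lemma ej_nth: "ej j t $ i = (if i = j then t else 0)"
  by (simp add: ej_def)

lemma ej_add: "ej j s + ej j t = ej j (s + t)"
  by (simp add: vec_eq_iff ej_nth)

lemma gap_density:
  fixes Y :: "(int^'n) set" and j :: 'n and Q :: nat
  assumes Q: "Q \<ge> 1"
    and gap: "\<And>z t. z \<in> Y \<Longrightarrow> 1 \<le> t \<Longrightarrow> t \<le> int Q \<Longrightarrow> z + ej j t \<notin> Y"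
    and R: "R \<ge> real CARD('n) * (real Q + 1) + 1"
  shows "upper_density R Y \<le> 3 / real Q"
proof (rule D_le)
  fix x :: "real^'n"
  define n where "n = real CARD('n)"
  have n1: "n \<ge> 1" unfolding n_def by simp
  have "n * (real Q + 1) \<ge> 0" using n1 by simp
  then have R1: "R \<ge> 1" using R unfolding n_def by linarith
  define A where "A = supball_Z x R \<inter> Y"
  define T where "T s = (\<lambda>z. z + ej j (int s)) ` A" for s :: nat
  have finA: "finite A" unfolding A_def by (simp add: supball_finite)
  have cardT: "card (T s) = card A" for s
    unfolding T_def by (rule card_image) (rule translate_inj)
  have Tsub: "T s \<subseteq> supball_Z x (R + real Q)" if "s < Q" for s
  proof
    fix q assume "q \<in> T s"
    then obtain z where z: "z \<in> A" "q = z + ej j (int s)" unfolding T_def by auto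
    have "\<bar>x $ i - real_of_int (q $ i)\<bar> < R + real Q" for i
    proof -
      have "\<bar>x $ i - real_of_int (z $ i)\<bar> < R" using z(1) unfolding A_def by (auto simp: supball_Z_iff)
      moreover have "\<bar>real_of_int (ej j (int s) $ i)\<bar> \<le> real Q" using that by (simp add: ej_nth)
      ultimately show ?thesis using z(2) by simp
    qed
    then show "q \<in> supball_Z x (R + real Q)" by (simp add: supball_Z_iff)
  qed
  have disj: "T s \<inter> T s' = {}" if "s < s'" "s' < Q" for s s'
  proof (rule ccontr)
    assume "T s \<inter> T s' \<noteq> {}"
    then obtain q where q: "q \<in> T s" "q \<in> T s'" by auto
    from q(1) obtain z where z1: "z \<in> A" "q = z + ej j (int s)" unfolding T_def by auto
    from q(2) obtain z' where z2: "z' \<in> A" "q = z' + ej j (int s')" unfolding T_def by auto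
    have z: "z \<in> A" "z' \<in> A" using z1 z2 by auto
    have "z $ i = (z' + ej j (int s' - int s)) $ i" for i
    proof -
      have "(z + ej j (int s)) $ i = (z' + ej j (int s')) $ i" using z1 z2 by simp
      then show ?thesis by (cases "i = j") (simp_all add: ej_nth)
    qed
    then have "z = z' + ej j (int s' - int s)" by (simp add: vec_eq_iff)
    moreover have "z' \<in> Y" "z \<in> Y" using z unfolding A_def by auto
    ultimately show False using gap[of z' "int s' - int s"] that by auto
  qed
  have "card (\<Union>s\<in>{..<Q}. T s) = (\<Sum>s\<in>{..<Q}. card (T s))"
  proof (rule card_UN_disjoint)
    show "\<forall>i\<in>{..<Q}. finite (T i)" unfolding T_def using finA by auto
    show "\<forall>i\<in>{..<Q}. \<forall>j\<in>{..<Q}. i \<noteq> j \<longrightarrow> T i \<inter> T j = {}"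
    proof (intro ballI impI)
      fix a b assume ab: "a \<in> {..<Q}" "b \<in> {..<Q}" "a \<noteq> b"
      show "T a \<inter> T b = {}"
      proof (cases "a < b")
        case True then show ?thesis using disj[of a b] ab by auto
      next
        case False then have "b < a" using ab(3) by simp
        then show ?thesis using disj[of b a] ab by auto
      qed
    qed
  qed simp
  also have "\<dots> = Q * card A" by (simp add: cardT)
  finally have cu: "card (\<Union>s\<in>{..<Q}. T s) = Q * card A" .
  have "Q * card A \<le> card (supball_Z x (R + real Q))"
    unfolding cu[symmetric] by (rule card_mono) (use Tsub in \<open>auto simp: supball_finite\<close>)
  then have "real Q * real (card A) \<le> real (card (supball_Z x (R + real Q)))"
    by (metis of_nat_le_iff of_nat_mult)
  also have "\<dots> \<le> (2 * (R + real Q) + 1) ^ CARD('n)"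
    by (rule supball_card_le) (use R1 in simp)
  also have "\<dots> \<le> 3 * (2*R - 1) ^ CARD('n)"
  proof -
    define h where "h = (2 * real Q + 2) / (2*R-1)"
    have a: "2*R - 1 > 0" using R1 by simp
    have e: "2 * (R + real Q) + 1 = (2*R-1) * (1 + h)" unfolding h_def using a
      by (simp add: field_simps)
    have "n * (2 * real Q + 2) \<le> 2*R - 1" using R n1 unfolding n_def[symmetric]
      by (simp add: algebra_simps)
    then have "n * h \<le> 1" unfolding h_def using a by (simp add: field_simps)
    then show ?thesis unfolding e by (intro pow_bound) (use a n_def h_def in auto)
  qed
  also have "\<dots> \<le> 3 * real (card (supball_Z x R))"
    using supball_card_ge[OF R1, of x] by simp
  finally have main: "real Q * real (card A) \<le> 3 * real (card (supball_Z x R))" .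
  have B: "0 < real (card (supball_Z x R))" by (rule supball_card_pos[OF R1])
  have Qp: "real Q > 0" using Q by simp
  show "ratio Y x R \<le> 3 / real Q"
    unfolding ratio_def A_def[symmetric] using main B Qp by (simp add: field_simps)
qed



lemma nonint_gap:
  fixes x :: real
  assumes "x \<notin> \<int>"
  shows "\<exists>\<eta>>0. \<forall>m::int. \<eta> \<le> \<bar>x - real_of_int m\<bar>"
proof -
  have f: "real_of_int \<lfloor>x\<rfloor> < x"
    using assms of_int_floor_le[of x] by (metis Ints_of_int order_less_le)
  have c: "x < real_of_int \<lceil>x\<rceil>"
    using assms le_of_int_ceiling[of x] by (metis Ints_of_int order_less_le)
  have cf: "\<lceil>x\<rceil> \<le> \<lfloor>x\<rfloor> + 1" by (simp add: ceiling_le_iff)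
  define \<eta> where "\<eta> = min (x - real_of_int \<lfloor>x\<rfloor>) (real_of_int \<lceil>x\<rceil> - x)"
  have "\<eta> > 0" unfolding \<eta>_def using f c by simp
  moreover have "\<eta> \<le> \<bar>x - real_of_int m\<bar>" for m
  proof (cases "m \<le> \<lfloor>x\<rfloor>")
    case True
    then have "real_of_int m \<le> real_of_int \<lfloor>x\<rfloor>" by simp
    then show ?thesis unfolding \<eta>_def using f by simp
  next
    case False
    then have "\<lceil>x\<rceil> \<le> m" using cf by simp
    then have "real_of_int \<lceil>x\<rceil> \<le> real_of_int m" by simp
    then show ?thesis unfolding \<eta>_def using c by simp
  qed
  ultimately show ?thesis by blast
qed

lemma irrational_gap:
  fixes \<alpha> :: real
  assumes irr: "\<alpha> \<notin> \<rat>"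
  shows "\<exists>\<delta>>0. \<forall>t::int. 1 \<le> t \<and> t \<le> int Q \<longrightarrow> (\<forall>m::int. \<delta> \<le> \<bar>real_of_int t * \<alpha> - real_of_int m\<bar>)"
proof (induction Q)
  case 0
  show ?case by (rule exI[of _ 1]) auto
next
  case (Suc Q)
  then obtain \<delta> where d: "\<delta> > 0" "\<forall>t::int. 1 \<le> t \<and> t \<le> int Q \<longrightarrow> (\<forall>m::int. \<delta> \<le> \<bar>real_of_int t * \<alpha> - real_of_int m\<bar>)"
    by blast
  have "real_of_int (int (Suc Q)) * \<alpha> \<notin> \<int>"
  proof
    assume "real_of_int (int (Suc Q)) * \<alpha> \<in> \<int>"
    then obtain k where k: "real_of_int (int (Suc Q)) * \<alpha> = real_of_int k" by (auto elim: Ints_cases)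
    then have "\<alpha> = real_of_int k / real_of_int (int (Suc Q))"
      by (simp add: field_simps del: of_int_of_nat_eq)
    then have "\<alpha> \<in> \<rat>" by simp
    then show False using irr by simp
  qed
  then obtain \<eta> where e: "\<eta> > 0" "\<forall>m::int. \<eta> \<le> \<bar>real_of_int (int (Suc Q)) * \<alpha> - real_of_int m\<bar>"
    using nonint_gap by blast
  show ?case
  proof (rule exI[of _ "min \<delta> \<eta>"], intro conjI allI impI)
    show "0 < min \<delta> \<eta>" using d e by simp
    fix t :: int and m :: int
    assume t: "1 \<le> t \<and> t \<le> int (Suc Q)"
    show "min \<delta> \<eta> \<le> \<bar>real_of_int t * \<alpha> - real_of_int m\<bar>"
    proof (cases "t \<le> int Q")
      case True
      then have "\<delta> \<le> \<bar>real_of_int t * \<alpha> - real_of_int m\<bar>" using d(2) t by blast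
      then show ?thesis by simp
    next
      case False then have "t = int (Suc Q)" using t by simp
      then have "\<eta> \<le> \<bar>real_of_int t * \<alpha> - real_of_int m\<bar>" using e(2) by blast
      then show ?thesis by simp
    qed
  qed
qed

lemma rat_sum_den:
  assumes "finite J" "\<forall>j\<in>J. f j \<in> \<rat>"
  shows "\<exists>d::int. d > 0 \<and> (\<forall>v::'a \<Rightarrow> int. \<exists>m::int. real_of_int d * (\<Sum>j\<in>J. f j * real_of_int (v j)) = real_of_int m)"
  using assms
proof (induction J rule: finite_induct)
  case empty
  show ?case by (rule exI[of _ 1]) auto
next
  case (insert a J)
  then obtain d where d: "d > 0" "\<forall>v::'a \<Rightarrow> int. \<exists>m::int. real_of_int d * (\<Sum>j\<in>J. f j * real_of_int (v j)) = real_of_int m"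
    by auto
  have "f a \<in> \<rat>" using insert by auto
  then obtain p q where pq: "q > 0" "f a = real_of_int p / real_of_int q"
    by (metis Rats_cases' of_int_of_nat_eq)
  show ?case
  proof (rule exI[of _ "d * q"], intro conjI allI)
    show "d * q > 0" using d pq by simp
    fix v :: "'a \<Rightarrow> int"
    obtain m where m: "real_of_int d * (\<Sum>j\<in>J. f j * real_of_int (v j)) = real_of_int m" using d by blast
    have "real_of_int (d * q) * (\<Sum>j\<in>insert a J. f j * real_of_int (v j))
        = real_of_int q * (real_of_int d * (\<Sum>j\<in>J. f j * real_of_int (v j))) + real_of_int d * real_of_int q * f a * real_of_int (v a)"
      using insert.hyps by (simp add: algebra_simps)
    also have "\<dots> = real_of_int (q * m + d * p * v a)"
      using m pq by simp
    finally show "\<exists>m'::int. real_of_int (d * q) * (\<Sum>j\<in>insert a J. f j * real_of_int (v j)) = real_of_int m'" by blast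
  qed
qed

lemma ex_min_finite:
  fixes Pr :: "'n::finite \<Rightarrow> real \<Rightarrow> bool"
  assumes ex: "\<And>i. \<exists>\<delta>>0. Pr i \<delta>"
    and mono: "\<And>i \<delta> \<delta>'. Pr i \<delta> \<Longrightarrow> 0 < \<delta>' \<Longrightarrow> \<delta>' \<le> \<delta> \<Longrightarrow> Pr i \<delta>'"
  shows "\<exists>\<delta>>0. \<forall>i. Pr i \<delta>"
proof -
  obtain f where f: "\<And>i. f i > 0 \<and> Pr i (f i)" using ex by metis
  define \<delta> where "\<delta> = Min (range f)"
  have "\<delta> \<in> range f" unfolding \<delta>_def by (rule Min_in) auto
  then have "\<delta> > 0" using f by auto
  moreover have "\<delta> \<le> f i" for i unfolding \<delta>_def by (rule Min_le) auto
  ultimately show ?thesis using f mono by blast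
qed



lemma pv_add_ej:
  fixes P :: "real^'n^'n"
  shows "(P *v int_to_real (z + ej j t)) $ i = (P *v int_to_real z) $ i + real_of_int t * P $ i $ j"
proof -
  have "(P *v int_to_real (ej j t)) $ i = (\<Sum>k\<in>UNIV. P $ i $ k * (if k = j then real_of_int t else 0))"
    by (simp add: matrix_vector_mult_def ej_nth if_distrib cong: if_cong)
  also have "\<dots> = real_of_int t * P $ i $ j"
    by (simp add: if_distrib[of "\<lambda>x. P $ i $ _ * x"] sum.delta cong: if_cong)
  finally show ?thesis by (simp add: int_to_real_add matrix_vector_right_distrib)
qed

lemma round_half_bound: "\<bar>real_of_int (round_half a) - a\<bar> \<le> 1/2"
  unfolding round_half_eq by linarith

lemma pv_add:
  fixes P :: "real^'n^'n"
  shows "P *v int_to_real (z + v) = P *v int_to_real z + P *v int_to_real v"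
  by (simp add: int_to_real_add matrix_vector_right_distrib)

lemma pv_diff:
  fixes P :: "real^'n^'n"
  shows "P *v int_to_real (z - v) = P *v int_to_real z - P *v int_to_real v"
  by (simp add: int_to_real_diff matrix_vector_mult_diff_distrib)

lemma round_stable:
  assumes far: "\<And>k::int. \<delta> \<le> \<bar>a - 1/2 - real_of_int k\<bar>" and e: "\<bar>e\<bar> < \<delta>"
  shows "round_half (a + e) = round_half a"
proof -
  define b where "b = a - 1/2"
  have c1: "b \<le> real_of_int \<lceil>b\<rceil>" "real_of_int \<lceil>b\<rceil> - 1 < b" using ceiling_correct[of b] by auto
  have f1: "\<delta> \<le> \<bar>b - real_of_int \<lceil>b\<rceil>\<bar>" using far[of "\<lceil>b\<rceil>"] unfolding b_def by simp
  have f2: "\<delta> \<le> \<bar>b - real_of_int (\<lceil>b\<rceil> - 1)\<bar>" using far[of "\<lceil>b\<rceil> - 1"] unfolding b_def by simp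
  have g1: "\<delta> \<le> real_of_int \<lceil>b\<rceil> - b" using f1 c1 by arith
  have g2: "\<delta> \<le> b - real_of_int \<lceil>b\<rceil> + 1" using f2 c1 by simp
  have e2: "- \<delta> < e" "e < \<delta>" using e by (auto simp: abs_less_iff)
  have "real_of_int \<lceil>b\<rceil> - 1 < b + e \<and> b + e \<le> real_of_int \<lceil>b\<rceil>"
    using g1 g2 e2 by linarith
  then have "\<lceil>b + e\<rceil> = \<lceil>b\<rceil>" by (intro ceiling_unique) auto
  then show ?thesis unfolding round_half_eq b_def by (simp add: algebra_simps)
qed

lemma floor_near: "\<bar>x - real_of_int w\<bar> < 1/2 \<Longrightarrow> \<lfloor>x + 1/2\<rfloor> = w"
proof -
  assume a: "\<bar>x - real_of_int w\<bar> < 1/2"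
  have "x - 1/2 < real_of_int w" "real_of_int w < x + 1/2" using a by arith+
  then show ?thesis by (intro floor_unique) linarith+
qed

lemma floor_half_bound: "\<bar>real_of_int \<lfloor>x + 1/2\<rfloor> - x\<bar> \<le> 1/2"
proof -
  have "real_of_int \<lfloor>x + 1/2\<rfloor> \<le> x + 1/2" "x + 1/2 < real_of_int \<lfloor>x + 1/2\<rfloor> + 1"
    using floor_correct[of "x + 1/2"] by auto
  then show ?thesis by arith
qed

abbreviation symd :: "(int^'n) set \<Rightarrow> int^'n \<Rightarrow> (int^'n) set" where
  "symd G v \<equiv> (translate G v - G) \<union> (G - translate G v)"

lemma sym_incl:
  fixes f :: "int^'n \<Rightarrow> int^'n"
  shows "symd (f ` G) w \<subseteq> f ` symd G v \<union> (\<lambda>z. f (z + v)) ` {z\<in>G. f (z + v) \<noteq> f z + w}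
           \<union> (\<lambda>z. f z + w) ` {z\<in>G. f (z + v) \<noteq> f z + w}"
proof
  fix q assume q: "q \<in> symd (f ` G) w"
  show "q \<in> f ` symd G v \<union> (\<lambda>z. f (z + v)) ` {z\<in>G. f (z + v) \<noteq> f z + w}
           \<union> (\<lambda>z. f z + w) ` {z\<in>G. f (z + v) \<noteq> f z + w}"
  proof (cases "q \<in> translate (f ` G) w")
    case True
    then obtain x where x: "x \<in> G" "q = f x + w" unfolding translate_def by auto
    have qn: "q \<notin> f ` G" using q True by auto
    show ?thesis
    proof (cases "f (x + v) = f x + w")
      case False then show ?thesis using x by auto
    next
      case True
      have xv: "x + v \<in> translate G v" using x(1) unfolding translate_def by auto
      have "x + v \<notin> G"
      proof
        assume "x + v \<in> G"
        then have "f (x + v) \<in> f ` G" by blast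
        then show False using qn True x by simp
      qed
      then have "x + v \<in> symd G v" using xv by auto
      then have "f (x + v) \<in> f ` symd G v" by blast
      then show ?thesis using True x by simp
    qed
  next
    case False
    then have qE: "q \<in> f ` G" using q by auto
    then obtain y where y: "y \<in> G" "q = f y" by auto
    show ?thesis
    proof (cases "y \<in> translate G v")
      case True
      then obtain x where x: "x \<in> G" "y = x + v" unfolding translate_def by auto
      show ?thesis
      proof (cases "f (x + v) = f x + w")
        case True
        then have "q \<in> translate (f ` G) w" using x y unfolding translate_def by auto
        then show ?thesis using False by simp
      next
        case False then show ?thesis using x y by auto
      qed
    next
      case False then show ?thesis using y by auto
    qed
  qed
qed

lemma sym_translate:
  fixes G :: "(int^'n) set"
  shows "symd G (u - a) \<subseteq> translate (symd G u \<union> symd G a) (- a)"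
proof
  fix z assume z: "z \<in> symd G (u - a)"
  have tr: "y \<in> translate S t \<longleftrightarrow> y - t \<in> S" for y t and S :: "(int^'n) set"
    unfolding translate_def by (auto simp: image_iff intro!: bexI[where x="y - t"])
  have e1: "z - (u - a) = (z + a) - u" "z = (z + a) - a" by simp_all
  have z': "z \<in> translate G (u - a) \<and> z \<notin> G \<or> z \<in> G \<and> z \<notin> translate G (u - a)"
    using z by blast
  have "z - (u - a) \<in> G \<and> z \<notin> G \<or> z \<in> G \<and> z - (u - a) \<notin> G"
    using z' by (simp only: tr)
  then have "(z+a) - u \<in> G \<and> (z+a) - a \<notin> G \<or> (z+a) - a \<in> G \<and> (z+a) - u \<notin> G"
    unfolding e1[symmetric] by simp
  then have "z + a \<in> symd G u \<union> symd G a"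
    unfolding Un_iff Diff_iff tr by blast
  then show "z \<in> translate (symd G u \<union> symd G a) (- a)" unfolding tr by simp
qed



lemma pv_comp: "(P *v int_to_real v) $ i = (\<Sum>j\<in>UNIV. P $ i $ j * real_of_int (v $ j))"
  by (simp add: matrix_vector_mult_def)

definition goodrow :: "real^'n^'n \<Rightarrow> nat \<Rightarrow> real \<Rightarrow> 'n \<Rightarrow> bool" where
  "goodrow P Q \<delta> i \<longleftrightarrow> \<delta> \<le> 1/4 \<and>
    ((\<forall>v::int^'n. \<forall>w::int. \<bar>(P *v int_to_real v) $ i - real_of_int w\<bar> < \<delta> \<longrightarrow> (P *v int_to_real v) $ i = real_of_int w)
     \<or> (\<exists>j. \<forall>t::int. 1 \<le> t \<and> t \<le> int Q \<longrightarrow> (\<forall>m::int. 2*\<delta> \<le> \<bar>real_of_int t * P $ i $ j - real_of_int m\<bar>)))"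

lemma goodrow_mono:
  fixes P :: "real^'n^'n"
  assumes g: "goodrow P Q \<delta> i" and d: "0 < \<delta>'" "\<delta>' \<le> \<delta>"
  shows "goodrow P Q \<delta>' i"
proof -
  have "\<delta> \<le> 1/4" using g unfolding goodrow_def by simp
  then have "\<delta>' \<le> 1/4" using d by simp
  moreover
  have "(\<forall>v::int^'n. \<forall>w::int. \<bar>(P *v int_to_real v) $ i - real_of_int w\<bar> < \<delta> \<longrightarrow> (P *v int_to_real v) $ i = real_of_int w)
     \<or> (\<exists>j. \<forall>t::int. 1 \<le> t \<and> t \<le> int Q \<longrightarrow> (\<forall>m::int. 2*\<delta> \<le> \<bar>real_of_int t * P $ i $ j - real_of_int m\<bar>))"
    using g unfolding goodrow_def by simp
  then have "(\<forall>v::int^'n. \<forall>w::int. \<bar>(P *v int_to_real v) $ i - real_of_int w\<bar> < \<delta>' \<longrightarrow> (P *v int_to_real v) $ i = real_of_int w)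
     \<or> (\<exists>j. \<forall>t::int. 1 \<le> t \<and> t \<le> int Q \<longrightarrow> (\<forall>m::int. 2*\<delta>' \<le> \<bar>real_of_int t * P $ i $ j - real_of_int m\<bar>))"
  proof
    assume h: "\<forall>v::int^'n. \<forall>w::int. \<bar>(P *v int_to_real v) $ i - real_of_int w\<bar> < \<delta> \<longrightarrow> (P *v int_to_real v) $ i = real_of_int w"
    show ?thesis
    proof (rule disjI1, intro allI impI)
      fix v :: "int^'n" and w :: int
      assume "\<bar>(P *v int_to_real v) $ i - real_of_int w\<bar> < \<delta>'"
      then have "\<bar>(P *v int_to_real v) $ i - real_of_int w\<bar> < \<delta>" using d by simp
      then show "(P *v int_to_real v) $ i = real_of_int w" using h by blast
    qed
  next
    assume "\<exists>j. \<forall>t::int. 1 \<le> t \<and> t \<le> int Q \<longrightarrow> (\<forall>m::int. 2*\<delta> \<le> \<bar>real_of_int t * P $ i $ j - real_of_int m\<bar>)"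
    then obtain j where h: "\<forall>t::int. 1 \<le> t \<and> t \<le> int Q \<longrightarrow> (\<forall>m::int. 2*\<delta> \<le> \<bar>real_of_int t * P $ i $ j - real_of_int m\<bar>)" by blast
    show ?thesis
    proof (rule disjI2, rule exI[of _ j], intro allI impI)
      fix t m :: int assume "1 \<le> t \<and> t \<le> int Q"
      then have "2*\<delta> \<le> \<bar>real_of_int t * P $ i $ j - real_of_int m\<bar>" using h by blast
      then show "2*\<delta>' \<le> \<bar>real_of_int t * P $ i $ j - real_of_int m\<bar>" using d by simp
    qed
  qed
  ultimately show ?thesis unfolding goodrow_def by blast
qed

lemma goodrow_ex: "\<exists>\<delta>>0. goodrow (P::real^'n^'n) Q \<delta> i"
proof (cases "\<forall>j. P $ i $ j \<in> \<rat>")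
  case True
  obtain d :: int where d: "d > 0" "\<forall>v::'n \<Rightarrow> int. \<exists>m::int. real_of_int d * (\<Sum>j\<in>UNIV. P $ i $ j * real_of_int (v j)) = real_of_int m"
    using rat_sum_den[of UNIV "\<lambda>j. P $ i $ j"] True by auto
  define \<delta> where "\<delta> = min (1/4) (1 / real_of_int d)"
  have "\<delta> > 0" unfolding \<delta>_def using d by simp
  moreover have "goodrow P Q \<delta> i"
    unfolding goodrow_def
  proof (intro conjI disjI1 allI impI)
    show "\<delta> \<le> 1/4" unfolding \<delta>_def by simp
    fix v :: "int^'n" and w :: int
    assume a: "\<bar>(P *v int_to_real v) $ i - real_of_int w\<bar> < \<delta>"
    obtain m where m: "real_of_int d * (P *v int_to_real v) $ i = real_of_int m"
      using d(2)[rule_format, of "\<lambda>j. v $ j"] unfolding pv_comp by blast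
    have "\<bar>(P *v int_to_real v) $ i - real_of_int w\<bar> < 1 / real_of_int d" using a unfolding \<delta>_def by simp
    then have "real_of_int d * \<bar>(P *v int_to_real v) $ i - real_of_int w\<bar> < 1"
      using d(1) by (simp add: field_simps)
    then have "\<bar>real_of_int d * (P *v int_to_real v) $ i - real_of_int d * real_of_int w\<bar> < 1"
      using d(1) by (simp add: abs_mult right_diff_distrib[symmetric])
    then have "\<bar>real_of_int (m - d * w)\<bar> < 1" using m by simp
    then have "m = d * w" by linarith
    then have "real_of_int d * (P *v int_to_real v) $ i = real_of_int d * real_of_int w" using m by simp
    then show "(P *v int_to_real v) $ i = real_of_int w" using d(1) by simp
  qed
  ultimately show ?thesis by blast
next
  case False
  then obtain j where j: "P $ i $ j \<notin> \<rat>" by auto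
  obtain \<delta>0 where d0: "\<delta>0 > 0" "\<forall>t::int. 1 \<le> t \<and> t \<le> int Q \<longrightarrow> (\<forall>m::int. \<delta>0 \<le> \<bar>real_of_int t * P $ i $ j - real_of_int m\<bar>)"
    using irrational_gap[OF j, of Q] by blast
  define \<delta> where "\<delta> = min (1/4) (\<delta>0 / 2)"
  have "\<delta> > 0" unfolding \<delta>_def using d0 by simp
  moreover have "goodrow P Q \<delta> i"
    unfolding goodrow_def
  proof (intro conjI disjI2)
    show "\<delta> \<le> 1/4" unfolding \<delta>_def by simp
    show "\<exists>j. \<forall>t::int. 1 \<le> t \<and> t \<le> int Q \<longrightarrow> (\<forall>m::int. 2*\<delta> \<le> \<bar>real_of_int t * P $ i $ j - real_of_int m\<bar>)"
    proof (intro exI allI impI)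
      fix t m :: int assume "1 \<le> t \<and> t \<le> int Q"
      then have "\<delta>0 \<le> \<bar>real_of_int t * P $ i $ j - real_of_int m\<bar>" using d0(2) by blast
      then show "2*\<delta> \<le> \<bar>real_of_int t * P $ i $ j - real_of_int m\<bar>" unfolding \<delta>_def by linarith
    qed
  qed
  ultimately show ?thesis by blast
qed

lemma goodrow_all: "\<exists>\<delta>>0. \<forall>i. goodrow (P::real^'n^'n) Q \<delta> i"
  by (rule ex_min_finite) (auto intro: goodrow_ex goodrow_mono)

definition Yset :: "real^'n^'n \<Rightarrow> real \<Rightarrow> 'n \<Rightarrow> (int^'n) set" where
  "Yset P \<delta> i = {z. \<exists>k::int. \<bar>(P *v int_to_real z) $ i - 1/2 - real_of_int k\<bar> < \<delta>}"

lemma Yset_gap: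
  assumes gap: "\<forall>t::int. 1 \<le> t \<and> t \<le> int Q \<longrightarrow> (\<forall>m::int. 2*\<delta> \<le> \<bar>real_of_int t * P $ i $ j - real_of_int m\<bar>)"
    and z: "z \<in> Yset P \<delta> i" and t: "1 \<le> t" "t \<le> int Q"
  shows "z + ej j t \<notin> Yset P \<delta> i"
proof
  assume z2: "z + ej j t \<in> Yset P \<delta> i"
  obtain k where k: "\<bar>(P *v int_to_real z) $ i - 1/2 - real_of_int k\<bar> < \<delta>" using z unfolding Yset_def by auto
  obtain k' where k': "\<bar>(P *v int_to_real z) $ i + real_of_int t * P $ i $ j - 1/2 - real_of_int k'\<bar> < \<delta>"
    using z2 pv_add_ej[of P z j t i] unfolding Yset_def by auto
  have "\<bar>real_of_int t * P $ i $ j - real_of_int (k' - k)\<bar> < 2*\<delta>" using k k' by simp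
  moreover have "2*\<delta> \<le> \<bar>real_of_int t * P $ i $ j - real_of_int (k' - k)\<bar>" using gap t by blast
  ultimately show False by simp
qed

lemma bad_incl:
  fixes P :: "real^'n^'n" and v :: "int^'n" and w :: "int^'n"
  assumes close: "\<And>i. \<bar>(P *v int_to_real v) $ i - real_of_int (w $ i)\<bar> < \<delta>"
  shows "{z\<in>G. discretization P (z + v) \<noteq> discretization P z + w}
     \<subseteq> (\<Union>i\<in>{i. (P *v int_to_real v) $ i \<noteq> real_of_int (w $ i)}. Yset P \<delta> i)"
proof
  fix z assume z: "z \<in> {z\<in>G. discretization P (z + v) \<noteq> discretization P z + w}"
  show "z \<in> (\<Union>i\<in>{i. (P *v int_to_real v) $ i \<noteq> real_of_int (w $ i)}. Yset P \<delta> i)"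
  proof (rule ccontr)
    assume nz: "z \<notin> (\<Union>i\<in>{i. (P *v int_to_real v) $ i \<noteq> real_of_int (w $ i)}. Yset P \<delta> i)"
    have "discretization P (z + v) $ i = (discretization P z + w) $ i" for i
    proof -
      define a where "a = (P *v int_to_real z) $ i"
      define e where "e = (P *v int_to_real v) $ i - real_of_int (w $ i)"
      have "discretization P (z + v) $ i = round_half ((a + e) + real_of_int (w $ i))"
        unfolding discretization_def round_vec_def pv_add a_def e_def by simp
      also have "\<dots> = round_half (a + e) + w $ i" by (rule round_half_add_int)
      also have "round_half (a + e) = round_half a"
      proof (cases "e = 0")
        case True then show ?thesis by simp
      next
        case False
        then have "z \<notin> Yset P \<delta> i" using nz unfolding e_def by auto
        then have far: "\<delta> \<le> \<bar>a - 1/2 - real_of_int k\<bar>" for k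
          unfolding Yset_def a_def by (auto simp: not_less)
        show ?thesis by (rule round_stable[OF far]) (use close[of i] e_def in simp)
      qed
      finally show ?thesis unfolding discretization_def round_vec_def a_def by simp
    qed
    then show False using z by (simp add: vec_eq_iff)
  qed
qed



theorem theorem2p4:
  fixes \<Gamma> :: "(int^'n) set" and P :: "real^'n^'n"
  assumes "almost_periodic_pattern \<Gamma>"
    and "orthogonal_matrix P"
  shows "almost_periodic_pattern (discretization P ` \<Gamma>)"
proof -
  note AP = assms(1) and P = assms(2)
  have GD: "relatively_dense \<Gamma>" using AP unfolding almost_periodic_pattern_def delone_def by simp
  have disc_bound: "\<bar>real_of_int (discretization P z $ i) - (P *v int_to_real z + 0) $ i\<bar> \<le> 1/2" for z i
    unfolding discretization_def round_vec_def using round_half_bound by simp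
  have E_rd: "relatively_dense (discretization P ` \<Gamma>)"
    by (rule reldense_image[OF P GD, of _ 0 "1/2"]) (use disc_bound in auto)
  have E_del: "delone (discretization P ` \<Gamma>)"
    unfolding delone_def using E_rd uniformly_discrete_any by blast
  have "\<exists>R\<epsilon>>0. \<exists>N. relatively_dense N \<and>
        (\<forall>R v. R \<ge> R\<epsilon> \<and> R \<ge> 1 \<and> v \<in> N \<longrightarrow>
           upper_density R (symd (discretization P ` \<Gamma>) v) < \<epsilon>)" if \<epsilon>: "\<epsilon> > 0" for \<epsilon>
  proof -
    define n where "n = real CARD('n)"
    have n1: "n \<ge> 1" unfolding n_def by simp
    define K where "K = (5 * n) ^ CARD('n)"
    have K1: "K \<ge> 1" unfolding K_def using n1 by (intro one_le_power) simp
    define \<epsilon>2 where "\<epsilon>2 = \<epsilon> / (8 * K)"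
    have \<epsilon>2: "\<epsilon>2 > 0" unfolding \<epsilon>2_def using \<epsilon> K1 by simp
    obtain R2 N where R2: "R2 > 0" and N: "relatively_dense N"
      and NP: "\<And>R v. R \<ge> R2 \<Longrightarrow> R \<ge> 1 \<Longrightarrow> v \<in> N \<Longrightarrow> upper_density R (symd \<Gamma> v) < \<epsilon>2"
      using AP \<epsilon>2 unfolding almost_periodic_pattern_def by meson
    define Q :: nat where "Q = nat \<lceil>24 * K * n / \<epsilon>\<rceil> + 1"
    have Q1: "Q \<ge> 1" unfolding Q_def by simp
    have Qge: "real Q \<ge> 24 * K * n / \<epsilon>" unfolding Q_def by linarith
    obtain \<delta> where \<delta>: "\<delta> > 0" and good: "\<And>i. goodrow P Q \<delta> i" using goodrow_all by blast
    have \<delta>4: "\<delta> \<le> 1/4" using good unfolding goodrow_def by blast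
    define m :: nat where "m = nat \<lceil>1/\<delta>\<rceil>"
    have m1: "real m \<ge> 1/\<delta>" unfolding m_def by linarith
    have mpos: "real m > 0" using m1 \<delta> by (smt (verit) zero_less_divide_1_iff)
    have im: "1 / real m \<le> \<delta>" using m1 \<delta> mpos by (simp add: field_simps)
    define \<beta> :: "int^'n \<Rightarrow> int^'n" where "\<beta> u = (\<chi> i. \<lfloor>frac ((P *v int_to_real u) $ i) * real m\<rfloor>)" for u
    have close: "\<bar>(P *v int_to_real (u - a)) $ i - real_of_int (\<lfloor>(P *v int_to_real u) $ i\<rfloor> - \<lfloor>(P *v int_to_real a) $ i\<rfloor>)\<bar> < \<delta>"
      if "\<beta> u = \<beta> a" for u a i
    proof -
      define x where "x = (P *v int_to_real u) $ i"
      define y where "y = (P *v int_to_real a) $ i"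
      have c: "\<lfloor>frac x * real m\<rfloor> = \<lfloor>frac y * real m\<rfloor>"
        using that unfolding \<beta>_def x_def y_def by (simp add: vec_eq_iff)
      have "\<bar>frac x * real m - frac y * real m\<bar> < 1"
        using c floor_correct[of "frac x * real m"] floor_correct[of "frac y * real m"] by linarith
      then have "\<bar>frac x - frac y\<bar> * real m < 1" by (simp add: left_diff_distrib[symmetric] abs_mult)
      then have "\<bar>frac x - frac y\<bar> < 1 / real m" using mpos by (simp add: field_simps)
      then have "\<bar>frac x - frac y\<bar> < \<delta>" using im by linarith
      moreover have "(P *v int_to_real (u - a)) $ i - real_of_int (\<lfloor>x\<rfloor> - \<lfloor>y\<rfloor>) = frac x - frac y"
        unfolding pv_diff x_def y_def frac_def by simp
      ultimately show ?thesis unfolding x_def y_def by simp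
    qed
    define rep' where "rep' b = (SOME a. a \<in> N \<and> \<beta> a = b)" for b
    define rep where "rep u = rep' (\<beta> u)" for u
    have rep: "rep u \<in> N \<and> \<beta> (rep u) = \<beta> u" if "u \<in> N" for u
      unfolding rep_def rep'_def by (rule someI_ex) (use that in blast)
    have "\<beta> ` N \<subseteq> supball_Z 0 (real m + 1)"
    proof
      fix b assume "b \<in> \<beta> ` N"
      then obtain u where b: "b = \<beta> u" by auto
      have "\<bar>0 $ i - real_of_int (b $ i)\<bar> < real m + 1" for i
      proof -
        have f: "0 \<le> frac ((P *v int_to_real u) $ i)" "frac ((P *v int_to_real u) $ i) < 1" by (simp_all add: frac_lt_1)
        have "0 \<le> frac ((P *v int_to_real u) $ i) * real m" using f by simp
        moreover have "frac ((P *v int_to_real u) $ i) * real m \<le> real m" using f mpos by simp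
        ultimately show ?thesis unfolding b \<beta>_def by simp linarith
      qed
      then show "b \<in> supball_Z 0 (real m + 1)" by (simp add: supball_Z_iff)
    qed
    then have finB: "finite (\<beta> ` N)" using supball_finite finite_subset by blast
    define A where "A = rep' ` (\<beta> ` N)"
    have finA: "finite A" unfolding A_def using finB by simp
    have repA: "rep u \<in> A" if "u \<in> N" for u unfolding A_def rep_def using that by simp
    define Mb where "Mb = (\<Sum>a\<in>A. \<Sum>i\<in>UNIV. \<bar>real_of_int (a $ i)\<bar>)"
    have Mb: "\<bar>real_of_int (a $ i)\<bar> \<le> Mb" if "a \<in> A" for a i
    proof -
      have "\<bar>real_of_int (a $ i)\<bar> \<le> (\<Sum>i\<in>UNIV. \<bar>real_of_int (a $ i)\<bar>)"
        by (rule member_le_sum) auto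
      also have "\<dots> \<le> Mb" unfolding Mb_def
        by (rule member_le_sum[of a A "\<lambda>a. \<Sum>i\<in>UNIV. \<bar>real_of_int (a $ i)\<bar>"]) (use that finA in \<open>auto intro: sum_nonneg\<close>)
      finally show ?thesis .
    qed
    have Mb0: "Mb \<ge> 0" unfolding Mb_def by (auto intro!: sum_nonneg)
    define M' where "M' = (\<lambda>u. u - rep u) ` N"
    have M'_rd: "relatively_dense M'"
    proof -
      obtain RN where RN: "RN > 0" "\<And>x R. R \<ge> RN \<Longrightarrow> \<exists>g\<in>N. g \<in> supball_Z x R"
        using N unfolding relatively_dense_def by blast
      have "\<exists>g\<in>M'. g \<in> supball_Z x R" if R: "R \<ge> RN + Mb + 1" for x R
      proof -
        obtain u where u: "u \<in> N" "u \<in> supball_Z x RN" using RN(2)[of RN x] by auto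
        have "\<bar>x $ i - real_of_int ((u - rep u) $ i)\<bar> < R" for i
        proof -
          have "\<bar>x $ i - real_of_int (u $ i)\<bar> < RN" using u(2) by (simp add: supball_Z_iff)
          moreover have "\<bar>real_of_int (rep u $ i)\<bar> \<le> Mb" using Mb repA u(1) by blast
          ultimately show ?thesis using R by simp
        qed
        then have "u - rep u \<in> supball_Z x R" by (simp add: supball_Z_iff)
        then show ?thesis unfolding M'_def using u(1) by blast
      qed
      moreover have "RN + Mb + 1 > 0" using RN Mb0 by simp
      ultimately show ?thesis unfolding relatively_dense_def by blast
    qed
    define hr :: "int^'n \<Rightarrow> int^'n" where "hr v = (\<chi> i. \<lfloor>(P *v int_to_real v) $ i + 1/2\<rfloor>)" for v
    define W where "W = hr ` M'"
    have W_rd: "relatively_dense W" unfolding W_def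
    proof (rule reldense_image[OF P M'_rd, of _ 0 "1/2"])
      fix z i
      show "\<bar>real_of_int (hr z $ i) - (P *v int_to_real z + 0) $ i\<bar> \<le> 1/2"
        unfolding hr_def using floor_half_bound[of "(P *v int_to_real z) $ i"] by simp
    qed simp
    define R\<epsilon> where "R\<epsilon> = max (max R2 (n * (real Q + 1) + 1)) 1"
    have R\<epsilon>: "R\<epsilon> > 0" unfolding R\<epsilon>_def by simp
    have bound: "upper_density R (symd (discretization P ` \<Gamma>) w) < \<epsilon>"
      if R: "R \<ge> R\<epsilon>" "R \<ge> 1" and w: "w \<in> W" for R w
    proof -
      obtain u where u: "u \<in> N" "w = hr (u - rep u)" using w unfolding W_def M'_def by auto
      define a where "a = rep u"
      have a: "a \<in> N" "\<beta> a = \<beta> u" using rep[OF u(1)] unfolding a_def by auto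
      define v where "v = u - a"
      have w_def: "w = hr v" using u unfolding v_def a_def by simp
      have closev: "\<bar>(P *v int_to_real v) $ i - real_of_int (w $ i)\<bar> < \<delta>" for i
      proof -
        have cl: "\<bar>(P *v int_to_real v) $ i - real_of_int (\<lfloor>(P *v int_to_real u) $ i\<rfloor> - \<lfloor>(P *v int_to_real a) $ i\<rfloor>)\<bar> < \<delta>"
          unfolding v_def by (rule close) (use a in simp)
        then have "w $ i = \<lfloor>(P *v int_to_real u) $ i\<rfloor> - \<lfloor>(P *v int_to_real a) $ i\<rfloor>"
          unfolding w_def hr_def using \<delta>4 by (simp add: floor_near)
        then show ?thesis using cl by simp
      qed
      define R' where "R' = n * (R + 1)"
      have R'R: "R' \<ge> R + 1" unfolding R'_def using mult_right_mono[OF n1, of "R+1"] R by simp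
      have R'1: "R' \<ge> 1" "R' \<ge> R2" "R' \<ge> n * (real Q + 1) + 1"
        using R'R R unfolding R\<epsilon>_def by auto
      define f where "f = discretization P"
      define Bad where "Bad = {z\<in>\<Gamma>. f (z + v) \<noteq> f z + w}"
      have incl: "symd (f ` \<Gamma>) w \<subseteq> f ` symd \<Gamma> v \<union> (\<lambda>z. f (z + v)) ` Bad \<union> (\<lambda>z. f z + w) ` Bad"
        unfolding Bad_def by (rule sym_incl)
      have "upper_density R (symd (f ` \<Gamma>) w) \<le> upper_density R (f ` symd \<Gamma> v \<union> (\<lambda>z. f (z + v)) ` Bad \<union> (\<lambda>z. f z + w) ` Bad)"
        by (rule D_mono[OF incl])
      also have "\<dots> \<le> upper_density R (f ` symd \<Gamma> v) + upper_density R ((\<lambda>z. f (z + v)) ` Bad) + upper_density R ((\<lambda>z. f z + w) ` Bad)"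
        using D_union[of R "f ` symd \<Gamma> v \<union> (\<lambda>z. f (z + v)) ` Bad" "(\<lambda>z. f z + w) ` Bad"]
              D_union[of R "f ` symd \<Gamma> v" "(\<lambda>z. f (z + v)) ` Bad"] by linarith
      finally have tot: "upper_density R (symd (f ` \<Gamma>) w) \<le> upper_density R (f ` symd \<Gamma> v) + upper_density R ((\<lambda>z. f (z + v)) ` Bad) + upper_density R ((\<lambda>z. f z + w) ` Bad)" .
      have t1: "upper_density R (f ` symd \<Gamma> v) \<le> K * upper_density R' (symd \<Gamma> v)"
        unfolding K_def R'_def n_def f_def
        by (rule transfer[OF P _ R(2), of _ _ 0]) (use disc_bound in auto)
      have "upper_density R' (symd \<Gamma> v) \<le> upper_density R' (translate (symd \<Gamma> u \<union> symd \<Gamma> a) (- a))"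
        unfolding v_def by (rule D_mono[OF sym_translate])
      also have "\<dots> \<le> upper_density R' (symd \<Gamma> u \<union> symd \<Gamma> a)" by (rule D_translate)
      also have "\<dots> \<le> upper_density R' (symd \<Gamma> u) + upper_density R' (symd \<Gamma> a)" by (rule D_union)
      also have "\<dots> < \<epsilon>2 + \<epsilon>2" using NP[OF R'1(2) R'1(1) u(1)] NP[OF R'1(2) R'1(1) a(1)] by simp
      finally have s1: "upper_density R' (symd \<Gamma> v) < 2 * \<epsilon>2" by simp
      have t2: "upper_density R ((\<lambda>z. f (z + v)) ` Bad) \<le> K * upper_density R' Bad"
        unfolding K_def R'_def n_def
      proof (rule transfer[OF P _ R(2), of _ _ "P *v int_to_real v"])
        fix z i
        show "\<bar>real_of_int (f (z + v) $ i) - (P *v int_to_real z + P *v int_to_real v) $ i\<bar> \<le> 1/2"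
          unfolding f_def discretization_def round_vec_def pv_add using round_half_bound by simp
      qed
      have t3: "upper_density R ((\<lambda>z. f z + w) ` Bad) \<le> K * upper_density R' Bad"
        unfolding K_def R'_def n_def
      proof (rule transfer[OF P _ R(2), of _ _ "int_to_real w"])
        fix z i
        show "\<bar>real_of_int ((f z + w) $ i) - (P *v int_to_real z + int_to_real w) $ i\<bar> \<le> 1/2"
          unfolding f_def discretization_def round_vec_def using round_half_bound by simp
      qed
      define I where "I = {i. (P *v int_to_real v) $ i \<noteq> real_of_int (w $ i)}"
      have "Bad \<subseteq> (\<Union>i\<in>I. Yset P \<delta> i)"
        unfolding Bad_def I_def f_def by (rule bad_incl[OF closev])
      then have "upper_density R' Bad \<le> upper_density R' (\<Union>i\<in>I. Yset P \<delta> i)" by (rule D_mono)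
      also have "\<dots> \<le> (\<Sum>i\<in>I. upper_density R' (Yset P \<delta> i))" by (rule D_UN) simp
      also have "\<dots> \<le> (\<Sum>i\<in>I. 3 / real Q)"
      proof (rule sum_mono)
        fix i assume i: "i \<in> I"
        have g: "goodrow P Q \<delta> i" by (rule good)
        have "\<not> (\<forall>v'::int^'n. \<forall>w'::int. \<bar>(P *v int_to_real v') $ i - real_of_int w'\<bar> < \<delta> \<longrightarrow> (P *v int_to_real v') $ i = real_of_int w')"
          using i closev[of i] unfolding I_def by blast
        then obtain j where j: "\<forall>t::int. 1 \<le> t \<and> t \<le> int Q \<longrightarrow> (\<forall>m::int. 2*\<delta> \<le> \<bar>real_of_int t * P $ i $ j - real_of_int m\<bar>)"
          using g unfolding goodrow_def by blast
        show "upper_density R' (Yset P \<delta> i) \<le> 3 / real Q"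
        proof (rule gap_density[OF Q1])
          fix z t assume "z \<in> Yset P \<delta> i" "1 \<le> t" "t \<le> int Q"
          then show "z + ej j t \<notin> Yset P \<delta> i" by (rule Yset_gap[OF j])
        next
          show "real CARD('n) * (real Q + 1) + 1 \<le> R'" using R'1(3) unfolding n_def .
        qed
      qed
      also have "\<dots> = real (card I) * (3 / real Q)" by simp
      also have "\<dots> \<le> n * (3 / real Q)"
        unfolding n_def by (rule mult_right_mono) (simp_all add: card_mono)
      finally have s2: "upper_density R' Bad \<le> n * (3 / real Q)" .
      have Qp: "real Q > 0" using Q1 by simp
      have "n * (3 / real Q) \<le> \<epsilon> / (8 * K)"
      proof -
        have "24 * K * n \<le> real Q * \<epsilon>" using Qge \<epsilon> by (simp add: field_simps)
        then show ?thesis using Qp K1 \<epsilon> by (simp add: field_simps)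
      qed
      then have s2': "upper_density R' Bad \<le> \<epsilon> / (8 * K)" using s2 by linarith
      have "upper_density R (symd (f ` \<Gamma>) w) < K * (2 * \<epsilon>2) + K * (\<epsilon> / (8 * K)) + K * (\<epsilon> / (8 * K))"
      proof -
        have "K * upper_density R' (symd \<Gamma> v) < K * (2 * \<epsilon>2)" using s1 K1 by simp
        moreover have "K * upper_density R' Bad \<le> K * (\<epsilon> / (8 * K))"
          by (rule mult_left_mono) (use s2' K1 in auto)
        ultimately show ?thesis using tot t1 t2 t3 by linarith
      qed
      also have "\<dots> = \<epsilon> / 2" unfolding \<epsilon>2_def using K1 by (simp add: field_simps)
      also have "\<dots> < \<epsilon>" using \<epsilon> by simp
      finally show ?thesis unfolding f_def .
    qed
    show ?thesis using R\<epsilon> W_rd bound by blast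
  qed
  then show ?thesis unfolding almost_periodic_pattern_def using E_del by blast
qed


end
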